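(* If $X$ is uncountable and $B \subseteq X$ is a Bernstein set, then the game $\Gamma(1_B)$ is not determined, i.e. neither player has a winning strategy.
   Context: Let $A$ be a non-empty countable set and $T$ a pruned tree on $A$ (a set of finite sequences of elements of $A$, closed under initial segments, in which every sequence has a proper extension in $T$). Let $X$ be the set of infinite branches of $T$, with the topology generated by the cylinder sets $O(s) = \{x \in X : s \text{ is an initial segment of } x\}$, $s \in T$. A set $B \subseteq X$ is a Bernstein set if neither $B$ nor $X \setminus B$ contains a non-empty perfect set; $1_B$ is the indicator function of $B$. For $f : X \to \mathbb{R}$, the game $\Gamma(f)$: Player I and Player II alternate, Player I moving first; Player I plays $x_0, x_1, \dots \in A$ subject to $(x_0,\dots,x_t) \in T$ for all $t$, and after each move $x_t$ Player II plays a real number $v_t$. Player II wins the run iff $f(x_0,x_1,\dots) = \limsup_{t\to\infty} v_t$; otherwise Player I wins. *)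

theory Defs
  imports "HOL-Analysis.Analysis" "HOL-Library.Liminf_Limsup" "HOL-Library.Sublist"
begin

definition init_seg :: "(nat \<Rightarrow> 'b) \<Rightarrow> nat \<Rightarrow> 'b list" where
  "init_seg x n = map x [0..<n]"

definition pruned_tree :: "'a set \<Rightarrow> 'a list set \<Rightarrow> bool" where
  "pruned_tree A T \<longleftrightarrow> T \<subseteq> lists A
     \<and> (\<forall>s\<in>T. \<forall>r. prefix r s \<longrightarrow> r \<in> T)
     \<and> (\<forall>s\<in>T. \<exists>t\<in>T. strict_prefix s t)"

definition branches :: "'a list set \<Rightarrow> (nat \<Rightarrow> 'a) set" where
  "branches T = {x. \<forall>n. init_seg x n \<in> T}"

definition cyl :: "'a list set \<Rightarrow> 'a list \<Rightarrow> (nat \<Rightarrow> 'a) set" where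
  "cyl T s = {x \<in> branches T. init_seg x (length s) = s}"

definition tree_topology :: "'a list set \<Rightarrow> (nat \<Rightarrow> 'a) topology" where
  "tree_topology T = topology_generated_by (cyl T ` T)"

definition perfect_in :: "'b topology \<Rightarrow> 'b set \<Rightarrow> bool" where
  "perfect_in Tp P \<longleftrightarrow> closedin Tp P \<and> Tp derived_set_of P = P"

definition bernstein_in :: "'b topology \<Rightarrow> 'b set \<Rightarrow> bool" where
  "bernstein_in Tp B \<longleftrightarrow> B \<subseteq> topspace Tp
     \<and> \<not> (\<exists>P. P \<noteq> {} \<and> perfect_in Tp P \<and> P \<subseteq> B)
     \<and> \<not> (\<exists>P. P \<noteq> {} \<and> perfect_in Tp P \<and> P \<subseteq> topspace Tp - B)"

text \<open>A strategy for Player I maps (I's previous moves x_0..x_{t-1},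
  II's previous moves v_0..v_{t-1}) to x_t; it must always produce legal moves.
  A strategy for Player II maps (x_0..x_t, v_0..v_{t-1}) to v_t.\<close>
definition I_winning :: "'a list set \<Rightarrow> ((nat \<Rightarrow> 'a) \<Rightarrow> real) \<Rightarrow> ('a list \<Rightarrow> real list \<Rightarrow> 'a) \<Rightarrow> bool" where
  "I_winning T f \<sigma> \<longleftrightarrow>
     (\<forall>x v. (\<forall>t. x t = \<sigma> (init_seg x t) (init_seg v t)) \<longrightarrow>
        (\<forall>t. init_seg x (Suc t) \<in> T) \<and>
        ereal (f x) \<noteq> limsup (\<lambda>t. ereal (v t)))"

definition II_winning :: "'a list set \<Rightarrow> ((nat \<Rightarrow> 'a) \<Rightarrow> real) \<Rightarrow> ('a list \<Rightarrow> real list \<Rightarrow> real) \<Rightarrow> bool" where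
  "II_winning T f \<tau> \<longleftrightarrow>
     (\<forall>x v. (\<forall>t. init_seg x (Suc t) \<in> T) \<longrightarrow>
        (\<forall>t. v t = \<tau> (init_seg x (Suc t)) (init_seg v t)) \<longrightarrow>
        ereal (f x) = limsup (\<lambda>t. ereal (v t)))"

definition game_determined :: "'a list set \<Rightarrow> ((nat \<Rightarrow> 'a) \<Rightarrow> real) \<Rightarrow> bool" where
  "game_determined T f \<longleftrightarrow> (\<exists>\<sigma>. I_winning T f \<sigma>) \<or> (\<exists>\<tau>. II_winning T f \<tau>)"

end

theory Submission
  imports Defs
begin



lemma length_init_seg[simp]: "length (init_seg x n) = n"
  by (simp add: init_seg_def)

lemma init_seg_Suc: "init_seg x (Suc n) = init_seg x n @ [x n]"
  by (simp add: init_seg_def)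

lemma take_init_seg: "m \<le> n \<Longrightarrow> take m (init_seg x n) = init_seg x m"
  by (simp add: init_seg_def take_map)

lemma nth_init_seg[simp]: "i < n \<Longrightarrow> init_seg x n ! i = x i"
  by (simp add: init_seg_def)

lemma init_seg_eq_mono: "init_seg x n = init_seg y n \<Longrightarrow> m \<le> n \<Longrightarrow> init_seg x m = init_seg y m"
  by (metis take_init_seg)

lemma prefix_init_seg: "m \<le> n \<Longrightarrow> prefix (init_seg x m) (init_seg x n)"
  by (metis take_init_seg take_is_prefix)

lemma init_seg_eq_iff: "init_seg x n = init_seg y n \<longleftrightarrow> (\<forall>i<n. x i = y i)"
  by (auto simp: init_seg_def)

lemma prefix_init_seg_iff: "prefix s (init_seg x n) \<longleftrightarrow> length s \<le> n \<and> init_seg x (length s) = s"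
  by (metis length_init_seg prefix_length_le take_init_seg take_is_prefix prefix_def
      append_take_drop_id append_eq_conv_conj)

lemma init_seg_of_list: "init_seg x (length s) = s \<Longrightarrow> i < length s \<Longrightarrow> x i = s ! i"
  by (metis nth_init_seg)

lemma pt_nil: "pruned_tree A T \<Longrightarrow> T \<noteq> {} \<Longrightarrow> [] \<in> T"
  unfolding pruned_tree_def by auto

lemma pt_prefix: "pruned_tree A T \<Longrightarrow> s \<in> T \<Longrightarrow> prefix r s \<Longrightarrow> r \<in> T"
  unfolding pruned_tree_def by auto

lemma in_cyl: "x \<in> cyl T s \<longleftrightarrow> x \<in> branches T \<and> init_seg x (length s) = s"
  by (simp add: cyl_def)

lemma cyl_init_seg: "x \<in> branches T \<Longrightarrow> x \<in> cyl T (init_seg x n)"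
  by (simp add: cyl_def)

lemma cyl_mono: "prefix r s \<Longrightarrow> cyl T s \<subseteq> cyl T r"
proof
  fix x assume "prefix r s" "x \<in> cyl T s"
  then have "prefix r (init_seg x (length s))" by (simp add: cyl_def)
  then show "x \<in> cyl T r" using \<open>x \<in> cyl T s\<close> by (simp add: cyl_def prefix_init_seg_iff)
qed

lemma cyl_init_seg_mono: "m \<le> n \<Longrightarrow> cyl T (init_seg x n) \<subseteq> cyl T (init_seg x m)"
  by (intro cyl_mono prefix_init_seg)

lemma branches_nil: "x \<in> branches T \<Longrightarrow> [] \<in> T"
proof -
  assume "x \<in> branches T"
  then have "init_seg x 0 \<in> T" by (simp add: branches_def)
  then show ?thesis by (simp add: init_seg_def)
qed

lemma topspace_tt: "branches T \<noteq> {} \<Longrightarrow> topspace (tree_topology T) = branches T"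
  unfolding tree_topology_def topology_generated_by_topspace
  by (auto simp: cyl_def intro!: bexI[of _ "[]"] branches_nil simp: init_seg_def)

lemma openin_tt_D:
  assumes "openin (tree_topology T) U" "x \<in> U"
  shows "\<exists>n. cyl T (init_seg x n) \<subseteq> U"
proof -
  have "generate_topology_on (cyl T ` T) U"
    using assms(1) unfolding tree_topology_def by (rule openin_topology_generated_by)
  then show ?thesis using assms(2)
  proof (induction arbitrary: x)
    case Empty then show ?case by simp
  next
    case (Int a b)
    then obtain n1 n2 where "cyl T (init_seg x n1) \<subseteq> a" "cyl T (init_seg x n2) \<subseteq> b" by blast
    then have "cyl T (init_seg x (max n1 n2)) \<subseteq> a \<inter> b"
      using cyl_init_seg_mono[of n1 "max n1 n2" T x] cyl_init_seg_mono[of n2 "max n1 n2" T x] by auto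
    then show ?case by blast
  next
    case (UN K) then show ?case by blast
  next
    case (Basis s)
    then obtain q where q: "q \<in> T" "s = cyl T q" by blast
    with Basis have "init_seg x (length q) = q" by (simp add: cyl_def)
    then show ?case using q by (intro exI[of _ "length q"]) auto
  qed
qed

lemma openin_tt_subset: "openin (tree_topology T) U \<Longrightarrow> U \<subseteq> branches T"
  using openin_subset[of "tree_topology T" U] unfolding tree_topology_def topology_generated_by_topspace
  by (auto simp: cyl_def)

lemma openin_tt_I:
  assumes "U \<subseteq> branches T" "\<And>x. x \<in> U \<Longrightarrow> \<exists>n. cyl T (init_seg x n) \<subseteq> U"
  shows "openin (tree_topology T) U"
proof -
  define K where "K = {c. c \<in> cyl T ` T \<and> c \<subseteq> U}"
  have "U \<subseteq> \<Union>K"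
  proof
    fix x assume x: "x \<in> U"
    then obtain n where n: "cyl T (init_seg x n) \<subseteq> U" using assms(2) by blast
    have xb: "x \<in> branches T" using x assms(1) by blast
    then have "init_seg x n \<in> T" by (simp add: branches_def)
    then have "cyl T (init_seg x n) \<in> K" using n by (simp add: K_def)
    moreover have "x \<in> cyl T (init_seg x n)" using xb by (rule cyl_init_seg)
    ultimately show "x \<in> \<Union>K" by blast
  qed
  moreover have "\<Union>K \<subseteq> U" by (auto simp: K_def)
  ultimately have U: "U = \<Union>K" by blast
  have "generate_topology_on (cyl T ` T) (\<Union>K)"
    by (rule generate_topology_on.UN) (auto simp: K_def intro: generate_topology_on.Basis)
  then show ?thesis unfolding tree_topology_def openin_topology_generated_by_iff U .
qed

lemma cyl_sub: "cyl T s \<subseteq> branches T"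
  by (auto simp: cyl_def)

lemma perfect_tt_I:
  assumes ne: "branches T \<noteq> {}" and P: "P \<subseteq> branches T"
    and cl: "\<And>x. x \<in> branches T \<Longrightarrow> x \<notin> P \<Longrightarrow> \<exists>n. cyl T (init_seg x n) \<inter> P = {}"
    and acc: "\<And>x n. x \<in> P \<Longrightarrow> \<exists>y\<in>P. y \<noteq> x \<and> y \<in> cyl T (init_seg x n)"
  shows "perfect_in (tree_topology T) P"
proof -
  have op: "openin (tree_topology T) (branches T - P)"
  proof (rule openin_tt_I)
    show "branches T - P \<subseteq> branches T" by blast
    fix x assume "x \<in> branches T - P"
    then obtain n where n: "cyl T (init_seg x n) \<inter> P = {}" using cl by blast
    have "cyl T (init_seg x n) \<subseteq> branches T - P" using n cyl_sub[of T "init_seg x n"] by blast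
    then show "\<exists>n. cyl T (init_seg x n) \<subseteq> branches T - P" by blast
  qed
  have clo: "closedin (tree_topology T) P"
    unfolding closedin_def topspace_tt[OF ne] using P op by (intro conjI)
  have sub: "tree_topology T derived_set_of P \<subseteq> P"
    using closedin_contains_derived_set[THEN iffD1, OF clo] by (rule conjunct1)
  have "P \<subseteq> tree_topology T derived_set_of P"
  proof
    fix x assume x: "x \<in> P"
    have "\<exists>y. y \<noteq> x \<and> y \<in> P \<and> y \<in> U" if U: "x \<in> U \<and> openin (tree_topology T) U" for U
    proof -
      obtain n where "cyl T (init_seg x n) \<subseteq> U" using openin_tt_D U by blast
      then show ?thesis using acc[OF x, of n] by blast
    qed
    moreover have "x \<in> topspace (tree_topology T)" using x P topspace_tt[OF ne] by blast
    ultimately show "x \<in> tree_topology T derived_set_of P"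
      unfolding in_derived_set_of by blast
  qed
  then have "tree_topology T derived_set_of P = P" by (rule equalityI[OF sub])
  then show ?thesis unfolding perfect_in_def using clo by (intro conjI)
qed




definition comp :: "'a list \<Rightarrow> 'a list \<Rightarrow> bool" where
  "comp a b \<longleftrightarrow> prefix a b \<or> prefix b a"

lemma comp_down: "comp a' b' \<Longrightarrow> prefix a a' \<Longrightarrow> prefix b b' \<Longrightarrow> comp a b"
  unfolding comp_def by (meson prefix_order.trans prefix_same_cases)

lemma cyl_comp: "x \<in> cyl T s \<Longrightarrow> x \<in> cyl T s' \<Longrightarrow> comp s s'"
  unfolding comp_def in_cyl
  by (metis nat_le_linear prefix_init_seg)

lemma cyl_prefix_init: "x \<in> cyl T s \<Longrightarrow> n \<le> length s \<Longrightarrow> cyl T s \<subseteq> cyl T (init_seg x n)"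
  by (metis cyl_mono in_cyl prefix_init_seg)

primrec nodeseq :: "('n \<Rightarrow> bool \<Rightarrow> 'n) \<Rightarrow> 'n \<Rightarrow> (nat \<Rightarrow> bool) \<Rightarrow> nat \<Rightarrow> 'n" where
  "nodeseq nx s0 \<alpha> 0 = s0"
| "nodeseq nx s0 \<alpha> (Suc k) = nx (nodeseq nx s0 \<alpha> k) (\<alpha> k)"

lemma prefix_nth': "prefix xs ys \<Longrightarrow> i < length xs \<Longrightarrow> ys ! i = xs ! i"
  unfolding prefix_def by (auto simp: nth_append)

lemma chain_point:
  assumes "\<And>k. prefix (c k) (c (Suc k))" "\<And>k. k \<le> length (c k)"
  shows "init_seg (\<lambda>i. c (Suc i) ! i) (length (c k)) = c k"
proof -
  have mono: "prefix (c a) (c b)" if "a \<le> b" for a b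
    using that by (induction b) (auto simp: le_Suc_eq intro: prefix_order.trans assms(1))
  have "(c (Suc i) ! i) = c k ! i" if "i < length (c k)" for i
  proof (cases "Suc i \<le> k")
    case True
    have "i < length (c (Suc i))" using assms(2)[of "Suc i"] by simp
    then show ?thesis using prefix_nth'[OF mono[OF True]] by simp
  next
    case False
    then have "k \<le> Suc i" by simp
    then show ?thesis using prefix_nth'[OF mono[of k "Suc i"] that] by simp
  qed
  then show ?thesis by (intro nth_equalityI) auto
qed

locale scheme =
  fixes A :: "'a set" and T :: "'a list set" and S :: "'n set" and s0 :: 'n
    and nx :: "'n \<Rightarrow> bool \<Rightarrow> 'n" and label :: "'n \<Rightarrow> 'a list"
  assumes pt: "pruned_tree A T"
    and s0: "s0 \<in> S"
    and nxS: "\<And>r b. r \<in> S \<Longrightarrow> nx r b \<in> S"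
    and lab: "\<And>r. r \<in> S \<Longrightarrow> label r \<in> T"
    and strict: "\<And>r b. r \<in> S \<Longrightarrow> strict_prefix (label r) (label (nx r b))"
    and inc: "\<And>r. r \<in> S \<Longrightarrow> \<not> comp (label (nx r True)) (label (nx r False))"
begin

abbreviation ns where "ns \<equiv> nodeseq nx s0"

definition PP where "PP = {x \<in> branches T. \<forall>k. \<exists>\<alpha>. x \<in> cyl T (label (ns \<alpha> k))}"

lemma ns_S: "ns \<alpha> k \<in> S"
  by (induction k) (auto simp: s0 nxS)

lemma ns_agree: "(\<And>j. j < k \<Longrightarrow> \<alpha> j = \<beta> j) \<Longrightarrow> ns \<alpha> k = ns \<beta> k"
  by (induction k) auto

lemma ns_step: "prefix (label (ns \<alpha> k)) (label (ns \<alpha> (Suc k)))"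
  using strict[OF ns_S] by (simp add: strict_prefix_def)

lemma ns_mono: "k \<le> m \<Longrightarrow> prefix (label (ns \<alpha> k)) (label (ns \<alpha> m))"
  proof (induction m)
  case (Suc m)
  then show ?case using ns_step[of \<alpha> m] by (auto simp: le_Suc_eq simp del: nodeseq.simps intro: prefix_order.trans)
qed simp

lemma ns_len: "k \<le> length (label (ns \<alpha> k))"
proof (induction k)
  case (Suc k)
  have "length (label (ns \<alpha> k)) < length (label (ns \<alpha> (Suc k)))"
    using strict[OF ns_S, of \<alpha> k "\<alpha> k"] by (simp add: prefix_length_less)
  then show ?case using Suc by simp
qed simp

lemma ns_comp_agree:
  "comp (label (ns \<alpha> k)) (label (ns \<beta> k)) \<Longrightarrow> j < k \<Longrightarrow> \<alpha> j = \<beta> j"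
proof (induction k arbitrary: j)
  case (Suc k)
  have c: "comp (label (ns \<alpha> k)) (label (ns \<beta> k))"
    using comp_down[OF Suc.prems(1) ns_step ns_step] .
  then have ag: "\<And>j. j < k \<Longrightarrow> \<alpha> j = \<beta> j" using Suc.IH by blast
  have "\<alpha> k = \<beta> k"
  proof (rule ccontr)
    assume ne: "\<alpha> k \<noteq> \<beta> k"
    have "ns \<alpha> k = ns \<beta> k" using ag ns_agree by blast
    then have "comp (label (nx (ns \<alpha> k) (\<alpha> k))) (label (nx (ns \<alpha> k) (\<beta> k)))"
      using Suc.prems(1) by simp
    then show False using inc[OF ns_S, of \<alpha> k] ne
      by (cases "\<alpha> k"; cases "\<beta> k") (auto simp: comp_def)
  qed
  then show ?case using ag Suc.prems(2) less_Suc_eq by auto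
qed simp

definition pnt where "pnt \<alpha> = (\<lambda>i. label (ns \<alpha> (Suc i)) ! i)"

lemma pnt_init: "init_seg (pnt \<alpha>) (length (label (ns \<alpha> k))) = label (ns \<alpha> k)"
  proof -
  have "init_seg (\<lambda>i. label (ns \<alpha> (Suc i)) ! i) (length (label (ns \<alpha> k))) = label (ns \<alpha> k)"
    by (rule chain_point[of "\<lambda>k. label (ns \<alpha> k)"]) (rule ns_step, rule ns_len)
  then show ?thesis unfolding pnt_def .
qed

lemma Tnil: "[] \<in> T"
  using pt_prefix[OF pt lab[OF s0]] by simp

lemma pnt_branch: "pnt \<alpha> \<in> branches T"
  unfolding branches_def
proof (safe)
  fix n
  have "prefix (init_seg (pnt \<alpha>) n) (init_seg (pnt \<alpha>) (length (label (ns \<alpha> n))))"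
    using ns_len by (intro prefix_init_seg) 
  moreover have "init_seg (pnt \<alpha>) (length (label (ns \<alpha> n))) \<in> T"
    unfolding pnt_init by (rule lab[OF ns_S])
  ultimately show "init_seg (pnt \<alpha>) n \<in> T"
    using pt_prefix[OF pt] by blast
qed

lemma pnt_cyl: "pnt \<alpha> \<in> cyl T (label (ns \<alpha> k))"
  using pnt_branch pnt_init by (simp add: in_cyl)

lemma pnt_PP: "pnt \<alpha> \<in> PP"
  unfolding PP_def using pnt_branch pnt_cyl by blast

lemma PP_alpha:
  assumes "x \<in> PP"
  shows "\<exists>\<alpha>. \<forall>k. x \<in> cyl T (label (ns \<alpha> k))"
proof -
  have "\<forall>k. \<exists>\<alpha>. x \<in> cyl T (label (ns \<alpha> k))" using assms unfolding PP_def by blast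
  then have "\<exists>ak. \<forall>k. x \<in> cyl T (label (ns (ak k) k))" by (rule choice)
  then obtain ak where ak0: "\<forall>k. x \<in> cyl T (label (ns (ak k) k))" ..
  have ak: "x \<in> cyl T (label (ns (ak k) k))" for k using ak0 by (rule spec)
  define \<alpha> where "\<alpha> j = ak (Suc j) j" for j
  have ag: "ak a j = ak b j" if "j < a" "a \<le> b" for a b j
  proof -
    have "comp (label (ns (ak a) a)) (label (ns (ak b) a))"
      using comp_down[OF cyl_comp[OF ak[of a] ak[of b]] _ ns_mono[OF that(2)]] by simp
    then show ?thesis using that(1) by (rule ns_comp_agree)
  qed
  have nsk: "ns \<alpha> k = ns (ak k) k" for k
  proof (rule ns_agree)
    fix j assume "j < k"
    then show "\<alpha> j = ak k j" using ag[of j "Suc j" k] by (simp add: \<alpha>_def)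
  qed
  show ?thesis
  proof (intro exI allI)
    fix k show "x \<in> cyl T (label (ns \<alpha> k))" using ak[of k] nsk[of k] by simp
  qed
qed

lemma finite_level: "finite {ns \<alpha> k | \<alpha>. True}"
proof (induction k)
  case 0 then show ?case by simp
next
  case (Suc k)
  have "{ns \<alpha> (Suc k) | \<alpha>. True} \<subseteq> (\<lambda>(r,b). nx r b) ` ({ns \<alpha> k | \<alpha>. True} \<times> UNIV)"
  proof
    fix y assume "y \<in> {ns \<alpha> (Suc k) | \<alpha>. True}"
    then obtain \<alpha> where "y = ns \<alpha> (Suc k)" by blast
    then have "y = (\<lambda>(r,b). nx r b) (ns \<alpha> k, \<alpha> k)" by simp
    moreover have "(ns \<alpha> k, \<alpha> k) \<in> {ns \<alpha> k | \<alpha>. True} \<times> UNIV" by blast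
    ultimately show "y \<in> (\<lambda>(r,b). nx r b) ` ({ns \<alpha> k | \<alpha>. True} \<times> UNIV)" by (rule image_eqI)
  qed
  moreover have "finite ((\<lambda>(r,b). nx r b) ` ({ns \<alpha> k | \<alpha>. True} \<times> (UNIV::bool set)))"
    by (rule finite_imageI, rule finite_cartesian_product[OF Suc.IH]) simp
  ultimately show ?case by (rule finite_subset)
qed

lemma PP_perfect: "perfect_in (tree_topology T) PP"
proof (rule perfect_tt_I)
  show "branches T \<noteq> {}" using pnt_branch by blast
  show "PP \<subseteq> branches T" unfolding PP_def by blast
next
  fix x assume x: "x \<in> branches T" "x \<notin> PP"
  then have "\<exists>k. \<forall>\<alpha>. x \<notin> cyl T (label (ns \<alpha> k))" unfolding PP_def by simp
  then obtain k where k: "\<And>\<alpha>. x \<notin> cyl T (label (ns \<alpha> k))" by blast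
  define L where "L = (\<lambda>r. length (label r)) ` {ns \<alpha> k | \<alpha>. True}"
  have fL: "finite L" unfolding L_def using finite_level by simp
  define m where "m = Max L"
  have le: "length (label (ns \<alpha> k)) \<le> m" for \<alpha>
    unfolding m_def using fL by (intro Max_ge) (auto simp: L_def)
  have "cyl T (init_seg x m) \<inter> PP = {}"
  proof (rule ccontr)
    assume "cyl T (init_seg x m) \<inter> PP \<noteq> {}"
    then obtain y where y0: "y \<in> cyl T (init_seg x m)" "y \<in> PP" by blast
    then obtain \<alpha> where "y \<in> cyl T (label (ns \<alpha> k))" unfolding PP_def by blast
    with y0 have y: "y \<in> cyl T (init_seg x m)" "y \<in> cyl T (label (ns \<alpha> k))" by simp_all
    then have "init_seg y m = init_seg x m" by (simp add: in_cyl)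
    then have "init_seg x (length (label (ns \<alpha> k))) = init_seg y (length (label (ns \<alpha> k)))"
      using init_seg_eq_mono le[of \<alpha>] by metis
    also have "\<dots> = label (ns \<alpha> k)" using y(2) by (simp add: in_cyl)
    finally have "init_seg x (length (label (ns \<alpha> k))) = label (ns \<alpha> k)" .
    then show False using k[of \<alpha>] x(1) by (simp add: in_cyl)
  qed
  then show "\<exists>n. cyl T (init_seg x n) \<inter> PP = {}" by blast
next
  fix x n assume x: "x \<in> PP"
  obtain \<alpha> where a: "\<And>k. x \<in> cyl T (label (ns \<alpha> k))" using PP_alpha[OF x] by blast
  define \<beta> where "\<beta> = \<alpha>(n := \<not> \<alpha> n)"
  have eqn: "ns \<beta> n = ns \<alpha> n" by (rule ns_agree) (simp add: \<beta>_def)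
  have "pnt \<beta> \<in> cyl T (label (ns \<alpha> n))" using pnt_cyl[of \<beta> n] eqn by simp
  moreover have "cyl T (label (ns \<alpha> n)) \<subseteq> cyl T (init_seg x n)"
    using cyl_prefix_init[OF a[of n] ns_len] .
  moreover have "pnt \<beta> \<noteq> x"
  proof
    assume "pnt \<beta> = x"
    then have "x \<in> cyl T (label (ns \<beta> (Suc n)))" using pnt_cyl[of \<beta> "Suc n"] by simp
    then have "comp (label (ns \<alpha> (Suc n))) (label (ns \<beta> (Suc n)))"
      by (rule cyl_comp[OF a])
    then have "\<alpha> n = \<beta> n" by (rule ns_comp_agree) simp
    then show False unfolding \<beta>_def by simp
  qed
  ultimately have "pnt \<beta> \<in> PP \<and> pnt \<beta> \<noteq> x \<and> pnt \<beta> \<in> cyl T (init_seg x n)"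
    using pnt_PP[of \<beta>] by (intro conjI) auto
  then show "\<exists>y\<in>PP. y \<noteq> x \<and> y \<in> cyl T (init_seg x n)" by (intro bexI[of _ "pnt \<beta>"]) simp_all
qed

lemma PP_ne: "PP \<noteq> {}" using pnt_PP[of "\<lambda>_. True"] by auto

end



lemma prefix_length_eq: "prefix a b \<Longrightarrow> length a = length b \<Longrightarrow> a = b"
  unfolding prefix_def by auto

lemma comp_eq: "comp a b \<Longrightarrow> length a = length b \<Longrightarrow> a = b"
  unfolding comp_def using prefix_length_eq[of a b] prefix_length_eq[of b a] by auto

lemma limsup_ge_freq:
  fixes v :: "nat \<Rightarrow> ereal"
  assumes "\<And>N. \<exists>n\<ge>N. c \<le> v n"
  shows "c \<le> limsup v"
proof (rule ccontr)
  assume "\<not> c \<le> limsup v"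
  then have "limsup v < c" by simp
  then have "eventually (\<lambda>n. c > v n) sequentially"
    using Limsup_le_iff[where C="limsup v" and F=sequentially and X=v] by auto
  then obtain N where "\<And>n. n \<ge> N \<Longrightarrow> v n < c" by (auto simp: eventually_sequentially)
  then show False using assms[of N] by (meson not_le)
qed

lemma limsup_le_ev:
  fixes v :: "nat \<Rightarrow> ereal"
  assumes "\<And>n. n \<ge> N \<Longrightarrow> v n \<le> c"
  shows "limsup v \<le> c"
  by (rule Limsup_bounded) (use assms in \<open>auto simp: eventually_sequentially\<close>)

lemma countable_T: "pruned_tree A T \<Longrightarrow> countable A \<Longrightarrow> countable T"
  unfolding pruned_tree_def by (meson countable_lists countable_subset)

definition bad :: "'a list set \<Rightarrow> (nat \<Rightarrow> 'a) set" where
  "bad T = \<Union> (cyl T ` {q \<in> T. countable (cyl T q)})"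

definition good :: "'a list set \<Rightarrow> 'a list \<Rightarrow> bool" where
  "good T r \<longleftrightarrow> r \<in> T \<and> uncountable (cyl T r)"

lemma countable_bad: "countable T \<Longrightarrow> countable (bad T)"
  unfolding bad_def by (intro countable_UN) auto

lemma good_init: "x \<in> branches T \<Longrightarrow> x \<notin> bad T \<Longrightarrow> good T (init_seg x n)"
proof -
  assume xb: "x \<in> branches T" and nb: "x \<notin> bad T"
  have T: "init_seg x n \<in> T" using xb by (simp add: branches_def)
  have c: "x \<in> cyl T (init_seg x n)" using xb by (rule cyl_init_seg)
  have "uncountable (cyl T (init_seg x n))"
  proof
    assume "countable (cyl T (init_seg x n))"
    then have "x \<in> bad T" using T c unfolding bad_def by blast
    then show False using nb by simp
  qed
  then show ?thesis using T by (simp add: good_def)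
qed

lemma good_nil: "uncountable (branches T) \<Longrightarrow> good T []"
proof -
  assume u: "uncountable (branches T)"
  then obtain x where "x \<in> branches T" by (metis countable_empty ex_in_conv)
  then have "[] \<in> T" by (rule branches_nil)
  moreover have "cyl T [] = branches T" by (auto simp: cyl_def init_seg_def)
  ultimately show ?thesis using u by (simp add: good_def)
qed

lemma uncountable_minus:
  "uncountable X \<Longrightarrow> countable C \<Longrightarrow> uncountable (X - C)"
  by (metis Diff_partition Un_Diff_cancel countable_Un_iff)

lemma good_split:
  assumes cT: "countable T" and g: "good T r"
  shows "\<exists>q1 q2. good T q1 \<and> good T q2 \<and> prefix r q1 \<and> prefix r q2 \<and> \<not> comp q1 q2"
proof -
  have u: "uncountable (cyl T r - bad T)"
    using g countable_bad[OF cT] uncountable_minus by (auto simp: good_def)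
  then obtain x where x: "x \<in> cyl T r - bad T" by (metis countable_empty ex_in_conv)
  have "uncountable (cyl T r - bad T - {x})" using u uncountable_minus by blast
  then obtain y where y: "y \<in> cyl T r - bad T" "y \<noteq> x" by (metis countable_empty ex_in_conv Diff_iff insert_iff)
  then have "\<exists>i. x i \<noteq> y i" using fun_eq_iff[of x y] by auto
  then obtain i where i: "x i \<noteq> y i" ..
  define n where "n = max (Suc i) (length r)"
  have xb: "x \<in> branches T" "init_seg x (length r) = r" using x by (auto simp: in_cyl)
  have yb: "y \<in> branches T" "init_seg y (length r) = r" using y by (auto simp: in_cyl)
  have "good T (init_seg x n)" "good T (init_seg y n)"
    using x y xb yb by (auto intro: good_init)
  moreover have "prefix r (init_seg x n)" "prefix r (init_seg y n)"
    using xb yb by (auto simp: prefix_init_seg_iff n_def)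
  moreover have "\<not> comp (init_seg x n) (init_seg y n)"
  proof
    assume "comp (init_seg x n) (init_seg y n)"
    then have "init_seg x n = init_seg y n" by (rule comp_eq) simp
    then show False using i by (simp add: init_seg_eq_iff n_def)
  qed
  ultimately show ?thesis by blast
qed




primrec vl :: "('a list \<Rightarrow> real list \<Rightarrow> real) \<Rightarrow> (nat \<Rightarrow> 'a) \<Rightarrow> nat \<Rightarrow> real list" where
  "vl \<tau> x 0 = []"
| "vl \<tau> x (Suc n) = vl \<tau> x n @ [\<tau> (init_seg x (Suc n)) (vl \<tau> x n)]"

definition vseq where "vseq \<tau> x t = vl \<tau> x (Suc t) ! t"

lemma length_vl[simp]: "length (vl \<tau> x n) = n"
  by (induction n) auto

lemma vseq_eq: "vseq \<tau> x t = \<tau> (init_seg x (Suc t)) (vl \<tau> x t)"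
  by (simp add: vseq_def nth_append)

lemma init_vseq: "init_seg (vseq \<tau> x) n = vl \<tau> x n"
proof (induction n)
  case 0 then show ?case by (simp add: init_seg_def)
next
  case (Suc n) then show ?case by (simp add: init_seg_Suc vseq_eq)
qed

lemma vl_local: "init_seg x n = init_seg y n \<Longrightarrow> vl \<tau> x n = vl \<tau> y n"
proof (induction n)
  case (Suc n)
  then have "init_seg x n = init_seg y n" using init_seg_eq_mono[of x "Suc n" y n] by simp
  then show ?case using Suc by simp
qed simp

lemma vseq_local: "init_seg x (Suc t) = init_seg y (Suc t) \<Longrightarrow> vseq \<tau> x t = vseq \<tau> y t"
proof -
  assume a: "init_seg x (Suc t) = init_seg y (Suc t)"
  then have "init_seg x t = init_seg y t" using init_seg_eq_mono[of x "Suc t" y t] by simp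
  then have "vl \<tau> x t = vl \<tau> y t" by (rule vl_local)
  then show ?thesis using a by (simp add: vseq_eq)
qed

lemma II_run:
  assumes win: "II_winning T f \<tau>" and x: "x \<in> branches T"
  shows "ereal (f x) = limsup (\<lambda>t. ereal (vseq \<tau> x t))"
proof -
  have 1: "\<forall>t. init_seg x (Suc t) \<in> T" using x by (simp add: branches_def)
  have 2: "\<forall>t. vseq \<tau> x t = \<tau> (init_seg x (Suc t)) (init_seg (vseq \<tau> x) t)"
    by (simp add: vseq_eq init_vseq)
  show ?thesis using win 1 2 unfolding II_winning_def by blast
qed

lemma II_case1:
  fixes V :: "(nat \<Rightarrow> 'a) \<Rightarrow> nat \<Rightarrow> real"
  assumes cT: "countable T" and pt: "pruned_tree A T" and bne: "branches T \<noteq> {}"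
    and bern: "bernstein_in (tree_topology T) B"
    and W: "\<And>x. x \<in> branches T \<Longrightarrow> ereal (indicator B x) = limsup (\<lambda>t. ereal (V x t))"
    and gs: "good T s"
    and Hs: "\<And>r n. good T r \<Longrightarrow> prefix s r \<Longrightarrow>
              \<exists>r'. good T r' \<and> prefix r r' \<and> (\<exists>t\<ge>n. \<forall>x\<in>cyl T r'. V x t > 1/2)"
  shows False
proof -
  define Q where "Q r q \<longleftrightarrow> good T (fst q) \<and> good T (snd q) \<and> prefix r (fst q) \<and> prefix r (snd q)
      \<and> \<not> comp (fst q) (snd q)" for r and q :: "'a list \<times> 'a list"
  have ex1: "\<forall>r. \<exists>q. good T r \<longrightarrow> Q r q"
  proof
    fix r show "\<exists>q. good T r \<longrightarrow> Q r q"
    proof (cases "good T r")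
      case True
      then obtain q1 q2 where "good T q1 \<and> good T q2 \<and> prefix r q1 \<and> prefix r q2 \<and> \<not> comp q1 q2"
        using good_split[OF cT] by blast
      then have "Q r (q1, q2)" by (simp add: Q_def)
      then show ?thesis by blast
    qed simp
  qed
  obtain f where f: "\<forall>r. good T r \<longrightarrow> Q r (f r)" using choice[OF ex1] by blast
  define R where "R p r' \<longleftrightarrow> good T r' \<and> prefix (fst p) r' \<and> (\<exists>t\<ge>snd p. \<forall>x\<in>cyl T r'. V x t > 1/2)"
    for p :: "'a list \<times> nat" and r'
  have ex2: "\<forall>p. \<exists>r'. good T (fst p) \<and> prefix s (fst p) \<longrightarrow> R p r'"
  proof
    fix p :: "'a list \<times> nat"
    show "\<exists>r'. good T (fst p) \<and> prefix s (fst p) \<longrightarrow> R p r'"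
    proof (cases "good T (fst p) \<and> prefix s (fst p)")
      case True
      then show ?thesis using Hs[of "fst p" "snd p"] unfolding R_def by blast
    next
      case False then show ?thesis by blast
    qed
  qed
  obtain fe where fe: "\<forall>p. good T (fst p) \<and> prefix s (fst p) \<longrightarrow> R p (fe p)" using choice[OF ex2] by blast
  define S where "S = {r. good T r \<and> prefix s r}"
  define sel where "sel r b = (if b then fst (f r) else snd (f r))" for r b
  define nx where "nx r b = fe (sel r b, length r)" for r b
  have sel: "good T (sel r b) \<and> prefix r (sel r b) \<and> prefix s (sel r b)" if r: "r \<in> S" for r b
  proof -
    have g: "good T r" "prefix s r" using r by (simp_all add: S_def)
    have q: "Q r (f r)" using f g(1) by blast
    then have "good T (sel r b) \<and> prefix r (sel r b)" by (cases b) (simp_all add: Q_def sel_def)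
    then show ?thesis using g(2) prefix_order.trans by blast
  qed
  have nxR: "R (sel r b, length r) (nx r b)" if r: "r \<in> S" for r b
    using fe sel[OF r, of b] unfolding nx_def by simp
  have nxS: "nx r b \<in> S" if r: "r \<in> S" for r b
  proof -
    have "good T (nx r b)" "prefix (sel r b) (nx r b)" using nxR[OF r, of b] by (simp_all add: R_def)
    moreover have "prefix s (sel r b)" using sel[OF r] by blast
    ultimately show ?thesis unfolding S_def using prefix_order.trans by blast
  qed
  have nxpre: "prefix r (nx r b)" if r: "r \<in> S" for r b
  proof -
    have "prefix (sel r b) (nx r b)" using nxR[OF r, of b] by (simp add: R_def)
    moreover have "prefix r (sel r b)" using sel[OF r] by blast
    ultimately show ?thesis using prefix_order.trans by blast
  qed
  have nxt: "\<exists>t\<ge>length r. \<forall>x\<in>cyl T (nx r b). V x t > 1/2" if r: "r \<in> S" for r b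
    using nxR[OF r, of b] by (simp add: R_def)
  have selnc: "\<not> comp (sel r True) (sel r False)" if r: "r \<in> S" for r
  proof -
    have "Q r (f r)" using f r by (simp add: S_def)
    then show ?thesis by (simp add: Q_def sel_def)
  qed
  have incl: "\<not> comp (nx r True) (nx r False)" if r: "r \<in> S" for r
  proof
    assume c: "comp (nx r True) (nx r False)"
    have "prefix (sel r True) (nx r True)" "prefix (sel r False) (nx r False)"
      using nxR[OF r] by (simp_all add: R_def)
    then have "comp (sel r True) (sel r False)" using comp_down[OF c] by blast
    then show False using selnc[OF r] by simp
  qed
  have strict: "strict_prefix r (nx r b)" if r: "r \<in> S" for r b
  proof -
    have "r \<noteq> nx r b"
    proof
      assume eq: "r = nx r b"
      have p1: "prefix r (sel r b)" using sel[OF r] by blast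
      have "prefix (sel r b) (nx r b)" using nxR[OF r, of b] by (simp add: R_def)
      then have "sel r b = r" using p1 eq prefix_order.antisym by simp
      moreover have "prefix r (sel r True)" "prefix r (sel r False)" using sel[OF r] by blast+
      ultimately have "comp (sel r True) (sel r False)" by (cases b) (simp_all add: comp_def)
      then show False using selnc[OF r] by simp
    qed
    then show ?thesis using nxpre[OF r, of b] by (simp add: strict_prefix_def)
  qed
  have sS: "s \<in> S" using gs by (simp add: S_def)
  interpret sc: scheme A T S s nx id
    by unfold_locales (simp_all add: pt sS nxS strict incl, simp add: S_def good_def)
  have PB: "sc.PP \<subseteq> B"
  proof
    fix x assume x: "x \<in> sc.PP"
    then have xb: "x \<in> branches T" unfolding sc.PP_def by blast
    obtain \<alpha> where a: "\<And>k. x \<in> cyl T (id (sc.ns \<alpha> k))" using sc.PP_alpha[OF x] by blast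
    have fr: "\<exists>t\<ge>N. ereal (1/2) \<le> ereal (V x t)" for N
    proof -
      have nS: "sc.ns \<alpha> N \<in> S" by (rule sc.ns_S)
      obtain t where t: "t \<ge> length (sc.ns \<alpha> N)" "\<forall>y\<in>cyl T (nx (sc.ns \<alpha> N) (\<alpha> N)). V y t > 1/2"
        using nxt[OF nS, of "\<alpha> N"] by blast
      have "x \<in> cyl T (nx (sc.ns \<alpha> N) (\<alpha> N))" using a[of "Suc N"] by simp
      then have "V x t > 1/2" using t(2) by blast
      moreover have "N \<le> t" using sc.ns_len[of N \<alpha>] t(1) by simp
      ultimately show ?thesis by (intro exI[of _ t]) simp
    qed
    have "ereal (1/2) \<le> limsup (\<lambda>t. ereal (V x t))" using fr by (rule limsup_ge_freq)
    then have "ereal (1/2) \<le> ereal (indicator B x)" using W[OF xb] by simp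
    then have "indicator B x \<noteq> (0::real)" by auto
    then show "x \<in> B" by (simp add: indicator_def split: if_splits)
  qed
  have top: "topspace (tree_topology T) = branches T" using topspace_tt[OF bne] .
  show False using bern sc.PP_ne sc.PP_perfect PB unfolding bernstein_in_def by blast
qed

lemma II_case2:
  fixes V :: "(nat \<Rightarrow> 'a) \<Rightarrow> nat \<Rightarrow> real"
  assumes cT: "countable T" and bne: "branches T \<noteq> {}"
    and bern: "bernstein_in (tree_topology T) B"
    and W: "\<And>x. x \<in> branches T \<Longrightarrow> ereal (indicator B x) = limsup (\<lambda>t. ereal (V x t))"
    and loc: "\<And>x y t. init_seg x (Suc t) = init_seg y (Suc t) \<Longrightarrow> V x t = V y t"
    and r: "good T r"
    and rn: "\<And>r' t. good T r' \<Longrightarrow> prefix r r' \<Longrightarrow> t \<ge> n \<Longrightarrow> \<exists>x\<in>cyl T r'. \<not> V x t > 1/2"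
  shows False
proof -
  have top: "topspace (tree_topology T) = branches T" using topspace_tt[OF bne] .
  define Q where "Q = cyl T r - bad T"
  have uQ: "uncountable Q" unfolding Q_def
    using r countable_bad[OF cT] uncountable_minus by (auto simp: good_def)
  have Qne: "Q \<noteq> {}" using uQ by auto
  have Qmem: "x \<in> branches T \<and> x \<notin> bad T \<and> init_seg x (length r) = r" if "x \<in> Q" for x
    using that by (simp add: Q_def in_cyl)
  have perf: "perfect_in (tree_topology T) Q"
  proof (rule perfect_tt_I[OF bne])
    show "Q \<subseteq> branches T" using Qmem by blast
  next
    fix x assume x: "x \<in> branches T" "x \<notin> Q"
    show "\<exists>n. cyl T (init_seg x n) \<inter> Q = {}"
    proof (cases "x \<in> cyl T r")
      case False
      then have ne: "init_seg x (length r) \<noteq> r" using x by (simp add: in_cyl)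
      have "cyl T (init_seg x (length r)) \<inter> Q = {}"
      proof (rule ccontr)
        assume "cyl T (init_seg x (length r)) \<inter> Q \<noteq> {}"
        then obtain y where y: "y \<in> cyl T (init_seg x (length r))" "y \<in> Q" by blast
        then have "init_seg y (length r) = init_seg x (length r)" by (simp add: in_cyl)
        moreover have "init_seg y (length r) = r" using Qmem[OF y(2)] by simp
        ultimately show False using ne by simp
      qed
      then show ?thesis by blast
    next
      case True
      then have "x \<in> bad T" using x by (simp add: Q_def)
      then obtain q where q: "q \<in> T" "countable (cyl T q)" "x \<in> cyl T q" by (auto simp: bad_def)
      then have xq: "init_seg x (length q) = q" by (simp add: in_cyl)
      have "cyl T q \<subseteq> bad T" using q(1,2) unfolding bad_def by blast
      then have "cyl T (init_seg x (length q)) \<inter> Q = {}" unfolding xq Q_def by blast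
      then show ?thesis by blast
    qed
  next
    fix x m assume x: "x \<in> Q"
    define m' where "m' = max m (length r)"
    have xb: "x \<in> branches T" "x \<notin> bad T" "init_seg x (length r) = r" using Qmem[OF x] by simp_all
    have g: "good T (init_seg x m')" using good_init xb(1,2) by blast
    have u1: "uncountable (cyl T (init_seg x m') - bad T)"
      using g countable_bad[OF cT] by (intro uncountable_minus) (simp_all add: good_def)
    have u2: "uncountable (cyl T (init_seg x m') - bad T - {x})"
      using uncountable_minus[OF u1, of "{x}"] by simp
    then have "cyl T (init_seg x m') - bad T - {x} \<noteq> {}" by (intro notI) simp
    then obtain y where "y \<in> cyl T (init_seg x m') - bad T - {x}" by blast
    then have y: "y \<in> cyl T (init_seg x m')" "y \<notin> bad T" "y \<noteq> x" by simp_all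
    have "prefix r (init_seg x m')" using xb(3) by (simp add: prefix_init_seg_iff m'_def)
    then have "y \<in> cyl T r" using y(1) cyl_mono by blast
    moreover have "y \<in> cyl T (init_seg x m)" using y(1) cyl_init_seg_mono[of m m' T x] by (auto simp: m'_def)
    ultimately show "\<exists>y\<in>Q. y \<noteq> x \<and> y \<in> cyl T (init_seg x m)" using y(2,3) by (auto simp: Q_def)
  qed
  have QB: "Q \<subseteq> branches T - B"
  proof
    fix x assume x: "x \<in> Q"
    have xb: "x \<in> branches T" "x \<notin> bad T" "init_seg x (length r) = r" using Qmem[OF x] by simp_all
    have le: "ereal (V x t) \<le> ereal (1/2)" if t: "max n (length r) \<le> t" for t
    proof -
      have "good T (init_seg x (Suc t))" using good_init xb(1,2) by blast
      moreover have "prefix r (init_seg x (Suc t))" using xb(3) t by (simp add: prefix_init_seg_iff)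
      moreover have "n \<le> t" using t by simp
      ultimately obtain y where y: "y \<in> cyl T (init_seg x (Suc t))" "\<not> V y t > 1/2"
        using rn by blast
      have "init_seg y (Suc t) = init_seg x (Suc t)" using y(1) by (simp add: in_cyl)
      then have "V y t = V x t" by (rule loc)
      then show ?thesis using y(2) by simp
    qed
    have "limsup (\<lambda>t. ereal (V x t)) \<le> ereal (1/2)" using le by (rule limsup_le_ev)
    then have "ereal (indicator B x) \<le> ereal (1/2)" using W[OF xb(1)] by simp
    then have "indicator B x \<noteq> (1::real)" by auto
    then show "x \<in> branches T - B" using xb(1) by (simp add: indicator_def split: if_splits)
  qed
  show False using bern Qne perf QB unfolding bernstein_in_def top by blast
qed

theorem no_II:
  assumes cA: "countable A" and pt: "pruned_tree A T"
    and unc: "uncountable (branches T)"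
    and bern: "bernstein_in (tree_topology T) B"
    and win: "II_winning T (indicator B) \<tau>"
  shows False
proof -
  have cT: "countable T" using countable_T[OF pt cA] .
  have bne: "branches T \<noteq> {}" using unc by auto
  have W: "ereal (indicator B x) = limsup (\<lambda>t. ereal (vseq \<tau> x t))" if "x \<in> branches T" for x
    using II_run[OF win that] .
  have loc: "vseq \<tau> x t = vseq \<tau> y t" if "init_seg x (Suc t) = init_seg y (Suc t)" for x y t
    using that by (rule vseq_local)
  show False
  proof (cases "\<exists>s. good T s \<and> (\<forall>r n. good T r \<longrightarrow> prefix s r \<longrightarrow>
              (\<exists>r'. good T r' \<and> prefix r r' \<and> (\<exists>t\<ge>n. \<forall>x\<in>cyl T r'. vseq \<tau> x t > 1/2)))")
    case True
    then obtain s where gs: "good T s" and Hs: "\<forall>r n. good T r \<longrightarrow> prefix s r \<longrightarrow>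
              (\<exists>r'. good T r' \<and> prefix r r' \<and> (\<exists>t\<ge>n. \<forall>x\<in>cyl T r'. vseq \<tau> x t > 1/2))" by blast
    show False
      by (rule II_case1[OF cT pt bne bern W gs]) (use Hs in blast)+
  next
    case False
    then have "\<not> (\<forall>r n. good T r \<longrightarrow> prefix [] r \<longrightarrow>
              (\<exists>r'. good T r' \<and> prefix r r' \<and> (\<exists>t\<ge>n. \<forall>x\<in>cyl T r'. vseq \<tau> x t > 1/2)))"
      using good_nil[OF unc] by blast
    then obtain r n where r: "good T r" and
      rn0: "\<not> (\<exists>r'. good T r' \<and> prefix r r' \<and> (\<exists>t\<ge>n. \<forall>x\<in>cyl T r'. vseq \<tau> x t > 1/2))"
      by auto
    have rn: "\<exists>x\<in>cyl T r'. \<not> vseq \<tau> x t > 1/2" if "good T r'" "prefix r r'" "t \<ge> n" for r' t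
      using rn0 that by blast
    show False by (rule II_case2[OF cT bne bern W loc r rn])
  qed
qed




primrec xl :: "('a list \<Rightarrow> real list \<Rightarrow> 'a) \<Rightarrow> (nat \<Rightarrow> real) \<Rightarrow> nat \<Rightarrow> 'a list" where
  "xl \<sigma> v 0 = []"
| "xl \<sigma> v (Suc n) = xl \<sigma> v n @ [\<sigma> (xl \<sigma> v n) (init_seg v n)]"

definition xrun where "xrun \<sigma> v t = xl \<sigma> v (Suc t) ! t"

lemma length_xl[simp]: "length (xl \<sigma> v n) = n"
  by (induction n) auto

lemma xrun_eq: "xrun \<sigma> v t = \<sigma> (xl \<sigma> v t) (init_seg v t)"
  by (simp add: xrun_def nth_append)

lemma init_xrun: "init_seg (xrun \<sigma> v) n = xl \<sigma> v n"
proof (induction n)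
  case 0 then show ?case by (simp add: init_seg_def)
next
  case (Suc n) then show ?case by (simp add: init_seg_Suc xrun_eq)
qed

lemma xl_local: "init_seg v n = init_seg w n \<Longrightarrow> xl \<sigma> v n = xl \<sigma> w n"
proof (induction n)
  case (Suc n)
  then have "init_seg v n = init_seg w n" using init_seg_eq_mono[of v "Suc n" w n] by simp
  then show ?case using Suc by simp
qed simp

lemma xl_take: "m \<le> n \<Longrightarrow> take m (xl \<sigma> v n) = xl \<sigma> v m"
  using take_init_seg[of m n "xrun \<sigma> v"] by (simp add: init_xrun)

lemma xl_mono: "m \<le> n \<Longrightarrow> prefix (xl \<sigma> v m) (xl \<sigma> v n)"
  using prefix_init_seg[of m n "xrun \<sigma> v"] by (simp add: init_xrun)

lemma I_run:
  assumes win: "I_winning T f \<sigma>"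
  shows "(\<forall>t. init_seg (xrun \<sigma> v) (Suc t) \<in> T) \<and> ereal (f (xrun \<sigma> v)) \<noteq> limsup (\<lambda>t. ereal (v t))"
proof -
  have h: "\<forall>t. xrun \<sigma> v t = \<sigma> (init_seg (xrun \<sigma> v) t) (init_seg v t)"
    by (simp add: xrun_eq init_xrun)
  show ?thesis using win h unfolding I_winning_def by blast
qed

definition ext :: "real list \<Rightarrow> nat \<Rightarrow> real" where
  "ext u i = (if i < length u then u ! i else 0)"

definition Fp where "Fp \<sigma> u = xl \<sigma> (ext u) (length u)"

lemma init_ext: "init_seg (ext u) (length u) = u"
  by (intro nth_equalityI) (auto simp: ext_def)

lemma Fp_alt: "init_seg v (length u) = u \<Longrightarrow> Fp \<sigma> u = xl \<sigma> v (length u)"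
proof -
  assume a: "init_seg v (length u) = u"
  have "init_seg (ext u) (length u) = init_seg v (length u)" using a init_ext[of u] by simp
  then show ?thesis unfolding Fp_def by (rule xl_local)
qed

lemma length_Fp[simp]: "length (Fp \<sigma> u) = length u"
  by (simp add: Fp_def)

lemma Fp_mono: "prefix u w \<Longrightarrow> prefix (Fp \<sigma> u) (Fp \<sigma> w)"
proof -
  assume p: "prefix u w"
  then have "prefix u (init_seg (ext w) (length w))" using init_ext[of w] by simp
  then have "init_seg (ext w) (length u) = u" by (simp add: prefix_init_seg_iff)
  then have "Fp \<sigma> u = xl \<sigma> (ext w) (length u)" by (rule Fp_alt)
  moreover have "length u \<le> length w" using p by (rule prefix_length_le)
  ultimately show ?thesis by (simp add: Fp_def xl_mono)
qed

lemma limsup_const_ev: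
  fixes v :: "nat \<Rightarrow> real"
  assumes "\<And>n. n \<ge> N \<Longrightarrow> v n = c"
  shows "limsup (\<lambda>t. ereal (v t)) = ereal c"
proof (rule antisym)
  show "limsup (\<lambda>t. ereal (v t)) \<le> ereal c" by (rule limsup_le_ev[of N]) (simp add: assms)
  show "ereal c \<le> limsup (\<lambda>t. ereal (v t))"
  proof (rule limsup_ge_freq)
    fix M show "\<exists>n\<ge>M. ereal c \<le> ereal (v n)"
      by (intro exI[of _ "max M N"]) (simp add: assms)
  qed
qed

lemma I_split:
  assumes win: "I_winning T (indicator B) \<sigma>" and u: "set u \<subseteq> {0,1}"
  shows "\<exists>w1 w2. set w1 \<subseteq> {0,1} \<and> set w2 \<subseteq> {0,1} \<and> prefix u w1 \<and> prefix u w2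
          \<and> \<not> comp (Fp \<sigma> w1) (Fp \<sigma> w2)"
proof (rule ccontr)
  assume H: "\<not> ?thesis"
  define y0 where "y0 i = (if i < length u then u ! i else 0)" for i
  define y1 where "y1 i = (if i < length u then u ! i else 1)" for i
  have um: "u ! i \<in> {0,1}" if "i < length u" for i using u nth_mem[OF that] by blast
  have y0s: "y0 i \<in> {0,1}" for i using um[of i] by (simp add: y0_def)
  have y1s: "y1 i \<in> {0,1}" for i using um[of i] by (simp add: y1_def)
  have y0u: "init_seg y0 (length u) = u" by (intro nth_equalityI) (auto simp: y0_def)
  have y1u: "init_seg y1 (length u) = u" by (intro nth_equalityI) (auto simp: y1_def)
  have eq: "xrun \<sigma> y0 t = xrun \<sigma> y1 t" for t
  proof -
    define n where "n = max (Suc t) (length u)"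
    define w0 where "w0 = init_seg y0 n"
    define w1 where "w1 = init_seg y1 n"
    have s0: "set w0 \<subseteq> {0,1}" using y0s by (auto simp: w0_def init_seg_def)
    have s1: "set w1 \<subseteq> {0,1}" using y1s by (auto simp: w1_def init_seg_def)
    have p0: "prefix u w0" using y0u by (simp add: w0_def prefix_init_seg_iff n_def)
    have p1: "prefix u w1" using y1u by (simp add: w1_def prefix_init_seg_iff n_def)
    have c: "comp (Fp \<sigma> w0) (Fp \<sigma> w1)" using H s0 s1 p0 p1 by blast
    have f0: "Fp \<sigma> w0 = xl \<sigma> y0 n" using Fp_alt[of y0 w0 \<sigma>] by (simp add: w0_def)
    have f1: "Fp \<sigma> w1 = xl \<sigma> y1 n" using Fp_alt[of y1 w1 \<sigma>] by (simp add: w1_def)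
    have "xl \<sigma> y0 n = xl \<sigma> y1 n" using comp_eq[OF c] f0 f1 by simp
    then have "init_seg (xrun \<sigma> y0) n = init_seg (xrun \<sigma> y1) n" by (simp add: init_xrun)
    then show ?thesis by (simp add: init_seg_eq_iff n_def)
  qed
  have l0: "limsup (\<lambda>t. ereal (y0 t)) = ereal 0" by (rule limsup_const_ev[of "length u"]) (simp add: y0_def)
  have l1: "limsup (\<lambda>t. ereal (y1 t)) = ereal 1" by (rule limsup_const_ev[of "length u"]) (simp add: y1_def)
  have xe: "xrun \<sigma> y0 = xrun \<sigma> y1" using eq by (simp add: fun_eq_iff)
  have n0: "indicator B (xrun \<sigma> y0) \<noteq> (0::real)" using I_run[OF win, of y0] l0 by auto
  have n1: "indicator B (xrun \<sigma> y0) \<noteq> (1::real)" using I_run[OF win, of y1] l1 xe by auto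
  show False using n0 n1 by (simp add: indicator_def split: if_splits)
qed




theorem no_I:
  assumes pt: "pruned_tree A T"
    and unc: "uncountable (branches T)"
    and bern: "bernstein_in (tree_topology T) B"
    and win: "I_winning T (indicator B) \<sigma>"
  shows False
proof -
  have bne: "branches T \<noteq> {}" using unc by auto
  have top: "topspace (tree_topology T) = branches T" using topspace_tt[OF bne] .
  have Tnil: "[] \<in> T" using bne branches_nil by blast
  define Q where "Q u q \<longleftrightarrow> set (fst q) \<subseteq> {0,1} \<and> set (snd q) \<subseteq> {0,1} \<and> prefix u (fst q)
     \<and> prefix u (snd q) \<and> \<not> comp (Fp \<sigma> (fst q)) (Fp \<sigma> (snd q))" for u and q :: "real list \<times> real list"
  have ex1: "\<forall>u. \<exists>q. set u \<subseteq> {0,1} \<longrightarrow> Q u q"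
  proof
    fix u show "\<exists>q. set u \<subseteq> {0,1} \<longrightarrow> Q u q"
    proof (cases "set u \<subseteq> {0,1}")
      case True
      then obtain w1 w2 where "set w1 \<subseteq> {0,1} \<and> set w2 \<subseteq> {0,1} \<and> prefix u w1 \<and> prefix u w2
          \<and> \<not> comp (Fp \<sigma> w1) (Fp \<sigma> w2)" using I_split[OF win] by blast
      then have "Q u (w1, w2)" by (simp add: Q_def)
      then show ?thesis by blast
    next
      case False then show ?thesis by blast
    qed
  qed
  obtain f where f: "\<forall>u. set u \<subseteq> {0,1} \<longrightarrow> Q u (f u)" using choice[OF ex1] by blast
  define S where "S = {u::real list. set u \<subseteq> {0,1}}"
  define sel where "sel u b = (if b then fst (f u) else snd (f u))" for u b
  define nx where "nx u b = sel u b @ [1]" for u b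
  have sel: "set (sel u b) \<subseteq> {0,1} \<and> prefix u (sel u b)" if u: "u \<in> S" for u b
  proof -
    have "Q u (f u)" using f u by (simp add: S_def)
    then show ?thesis by (cases b) (simp_all add: Q_def sel_def)
  qed
  have selnc: "\<not> comp (Fp \<sigma> (sel u True)) (Fp \<sigma> (sel u False))" if u: "u \<in> S" for u
  proof -
    have "Q u (f u)" using f u by (simp add: S_def)
    then show ?thesis by (simp add: Q_def sel_def)
  qed
  have FpT: "Fp \<sigma> u \<in> T" for u
  proof (cases "length u")
    case 0 then show ?thesis using Tnil by (simp add: Fp_def)
  next
    case (Suc t)
    have "init_seg (xrun \<sigma> (ext u)) (Suc t) \<in> T" using I_run[OF win, of "ext u"] by blast
    then show ?thesis using Suc by (simp add: Fp_def init_xrun)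
  qed
  have nxS: "nx u b \<in> S" if u: "u \<in> S" for u b
    using sel[OF u, of b] by (simp add: S_def nx_def)
  have nxpre: "prefix u (nx u b)" if u: "u \<in> S" for u b
  proof -
    have "prefix u (sel u b)" using sel[OF u] by blast
    moreover have "prefix (sel u b) (nx u b)" by (simp add: nx_def)
    ultimately show ?thesis by (rule prefix_order.trans)
  qed
  have nxlen: "length u < length (nx u b)" if u: "u \<in> S" for u b
  proof -
    have "length u \<le> length (sel u b)" using sel[OF u, of b] prefix_length_le by blast
    then show ?thesis by (simp add: nx_def)
  qed
  have strict: "strict_prefix (Fp \<sigma> u) (Fp \<sigma> (nx u b))" if u: "u \<in> S" for u b
  proof -
    have "prefix (Fp \<sigma> u) (Fp \<sigma> (nx u b))" using nxpre[OF u] by (rule Fp_mono)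
    moreover have "Fp \<sigma> u \<noteq> Fp \<sigma> (nx u b)"
    proof
      assume "Fp \<sigma> u = Fp \<sigma> (nx u b)"
      then have "length (Fp \<sigma> u) = length (Fp \<sigma> (nx u b))" by simp
      then show False using nxlen[OF u, of b] by simp
    qed
    ultimately show ?thesis by (simp add: strict_prefix_def)
  qed
  have incl: "\<not> comp (Fp \<sigma> (nx u True)) (Fp \<sigma> (nx u False))" if u: "u \<in> S" for u
  proof
    assume c: "comp (Fp \<sigma> (nx u True)) (Fp \<sigma> (nx u False))"
    have "prefix (Fp \<sigma> (sel u True)) (Fp \<sigma> (nx u True))" by (rule Fp_mono) (simp add: nx_def)
    moreover have "prefix (Fp \<sigma> (sel u False)) (Fp \<sigma> (nx u False))" by (rule Fp_mono) (simp add: nx_def)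
    ultimately have "comp (Fp \<sigma> (sel u True)) (Fp \<sigma> (sel u False))" by (rule comp_down[OF c])
    then show False using selnc[OF u] by simp
  qed
  have nilS: "[] \<in> S" by (simp add: S_def)
  interpret sc: scheme A T S "[]" nx "Fp \<sigma>"
    by unfold_locales (simp_all add: pt nilS nxS FpT strict incl)
  have PB: "sc.PP \<subseteq> branches T - B"
  proof
    fix x assume x: "x \<in> sc.PP"
    then have xb: "x \<in> branches T" unfolding sc.PP_def by blast
    obtain \<alpha> where a: "\<And>k. x \<in> cyl T (Fp \<sigma> (sc.ns \<alpha> k))" using sc.PP_alpha[OF x] by blast
    define c where "c k = sc.ns \<alpha> k" for k
    have cS: "c k \<in> S" for k unfolding c_def by (rule sc.ns_S)
    have cSuc: "c (Suc k) = nx (c k) (\<alpha> k)" for k by (simp add: c_def)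
    have cstep: "prefix (c k) (c (Suc k))" for k using nxpre[OF cS[of k]] cSuc[of k] by simp
    have clen: "k \<le> length (c k)" for k using sc.ns_len[of k \<alpha>] by (simp add: c_def)
    define y where "y i = c (Suc i) ! i" for i
    have yc: "init_seg y (length (c k)) = c k" for k
      unfolding y_def by (rule chain_point) (rule cstep, rule clen)
    have xc: "init_seg x (length (c k)) = xl \<sigma> y (length (c k))" for k
    proof -
      have "init_seg x (length (Fp \<sigma> (c k))) = Fp \<sigma> (c k)" using a[of k] by (simp add: c_def in_cyl)
      then show ?thesis using Fp_alt[OF yc[of k], of \<sigma>] by simp
    qed
    have xn: "init_seg x n = xl \<sigma> y n" for n
    proof -
      have "take n (init_seg x (length (c n))) = take n (xl \<sigma> y (length (c n)))" using xc[of n] by simp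
      then show ?thesis using clen[of n] by (simp add: take_init_seg xl_take)
    qed
    have xr: "x = xrun \<sigma> y"
    proof
      fix t
      have "init_seg x (Suc t) = init_seg (xrun \<sigma> y) (Suc t)" using xn[of "Suc t"] by (simp add: init_xrun)
      then show "x t = xrun \<sigma> y t" by (simp add: init_seg_eq_iff)
    qed
    have ys: "y i \<in> {0,1}" for i
    proof -
      have "i < length (c (Suc i))" using clen[of "Suc i"] by simp
      then have "y i \<in> set (c (Suc i))" unfolding y_def by (rule nth_mem)
      then show ?thesis using cS[of "Suc i"] by (auto simp: S_def)
    qed
    have "limsup (\<lambda>t. ereal (y t)) = ereal 1"
    proof (rule antisym)
      show "limsup (\<lambda>t. ereal (y t)) \<le> ereal 1"
      proof (rule limsup_le_ev[of 0])
        fix n show "ereal (y n) \<le> ereal 1" using ys[of n] by auto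
      qed
      show "ereal 1 \<le> limsup (\<lambda>t. ereal (y t))"
      proof (rule limsup_ge_freq)
        fix N
        define w where "w = sel (c N) (\<alpha> N)"
        have cs: "c (Suc N) = w @ [1]" by (simp add: cSuc nx_def w_def)
        have "prefix (c N) w" using sel[OF cS[of N]] by (simp add: w_def)
        then have "length (c N) \<le> length w" by (rule prefix_length_le)
        then have Nw: "N \<le> length w" using clen[of N] by simp
        have "init_seg y (length (c (Suc N))) = c (Suc N)" by (rule yc)
        then have "init_seg y (Suc (length w)) = w @ [1]" by (simp add: cs)
        then have "y (length w) = (w @ [1]) ! length w" using nth_init_seg[of "length w" "Suc (length w)" y] by simp
        then have "y (length w) = 1" by simp
        then show "\<exists>n\<ge>N. ereal 1 \<le> ereal (y n)" using Nw by (intro exI[of _ "length w"]) simp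
      qed
    qed
    moreover have "ereal (indicator B x) \<noteq> limsup (\<lambda>t. ereal (y t))" using I_run[OF win, of y] xr by simp
    ultimately have "indicator B x \<noteq> (1::real)" by auto
    then show "x \<in> branches T - B" using xb by (simp add: indicator_def split: if_splits)
  qed
  show False using bern sc.PP_ne sc.PP_perfect PB unfolding bernstein_in_def top by blast
qed

theorem mainTheorem7:
  fixes A :: "'a set" and T :: "'a list set" and B :: "(nat \<Rightarrow> 'a) set"
  assumes "A \<noteq> {}" and "countable A"
    and "pruned_tree A T"
    and "uncountable (branches T)"
    and "bernstein_in (tree_topology T) B"
  shows "\<not> (\<exists>\<sigma>. I_winning T (indicator B) \<sigma>) \<and> \<not> (\<exists>\<tau>. II_winning T (indicator B) \<tau>)"
  using no_I[OF assms(3,4,5)] no_II[OF assms(2,3,4,5)] by blast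



end
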